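(* For $n\ge 3$ let $M_n$ be the Cayley graph $\mathrm{Cay}(\mathbb{Z}_{2n},\{\pm1,\pm(n-1),n\})$. Then $Z_+(M_n)=n+2$.
   Context: $\mathrm{Cay}(\mathbb{Z}_{2n},S)$ has vertex set $\mathbb{Z}_{2n}$ with $x\sim y$ iff $x-y\in S$. $Z_+(G)$ is the positive zero forcing number: the minimum size of a set $B$ of initially black vertices such that repeated application of the rule "let $W_1,\dots,W_k$ be the vertex sets of components of $G$ minus the black vertices; a black vertex $u$ whose only white neighbour in the subgraph induced by $W_i\cup(\text{black vertices})$ is $w$ may turn $w$ black" eventually makes all vertices black. *)

theory Defs
  imports "HOL-Number_Theory.Cong"
begin

definition cay_vertices :: "nat \<Rightarrow> nat set" where
  "cay_vertices m = {0..<m}"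

definition cay_adj :: "nat \<Rightarrow> int set \<Rightarrow> nat \<Rightarrow> nat \<Rightarrow> bool" where
  "cay_adj m S x y \<longleftrightarrow> x < m \<and> y < m \<and> (\<exists>s\<in>S. [int x - int y = s] (mod int m))"

definition component_of :: "('a \<Rightarrow> 'a \<Rightarrow> bool) \<Rightarrow> 'a set \<Rightarrow> 'a \<Rightarrow> 'a set" where
  "component_of E U x = {y \<in> U. (\<lambda>a b. a \<in> U \<and> b \<in> U \<and> E a b)\<^sup>*\<^sup>* x y}"

definition components :: "('a \<Rightarrow> 'a \<Rightarrow> bool) \<Rightarrow> 'a set \<Rightarrow> 'a set set" where
  "components E U = component_of E U ` U"

definition pzf_step :: "'a set \<Rightarrow> ('a \<Rightarrow> 'a \<Rightarrow> bool) \<Rightarrow> 'a set \<Rightarrow> 'a set \<Rightarrow> bool" where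
  "pzf_step V E B B' \<longleftrightarrow>
     (\<exists>W \<in> components E (V - B). \<exists>u \<in> B. \<exists>w \<in> W.
        E u w \<and> (\<forall>v \<in> W. E u v \<longrightarrow> v = w) \<and> B' = insert w B)"

definition pos_zero_forcing_set :: "'a set \<Rightarrow> ('a \<Rightarrow> 'a \<Rightarrow> bool) \<Rightarrow> 'a set \<Rightarrow> bool" where
  "pos_zero_forcing_set V E B \<longleftrightarrow> B \<subseteq> V \<and> (pzf_step V E)\<^sup>*\<^sup>* B V"

definition Zplus :: "'a set \<Rightarrow> ('a \<Rightarrow> 'a \<Rightarrow> bool) \<Rightarrow> nat" where
  "Zplus V E = (LEAST k. \<exists>B. pos_zero_forcing_set V E B \<and> card B = k)"

end

theory Submission
  imports Defs
begin

definition rg :: "nat \<Rightarrow> nat \<Rightarrow> nat" where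
  "rg n x = (if x < n then x else x - n)"
definition ra :: "nat \<Rightarrow> nat \<Rightarrow> nat \<Rightarrow> bool" where
  "ra n a b \<longleftrightarrow> a = b \<or> b = a + 1 \<or> a = b + 1 \<or> (a = 0 \<and> b = n - 1) \<or> (b = 0 \<and> a = n - 1)"

lemma dvd_small:
  fixes t m :: int
  assumes "m > 0" "-2*m < t" "t < 2*m"
  shows "m dvd t \<longleftrightarrow> t = 0 \<or> t = m \<or> t = -m"
proof
  assume "m dvd t"
  then obtain k where k: "t = m * k" by auto
  have "k > -2" proof (rule ccontr)
    assume "\<not> k > -2" then have "m*k \<le> m*(-2)" using assms(1) by (intro mult_left_mono) auto
    thus False using k assms by linarith qed
  moreover have "k < 2" proof (rule ccontr)
    assume "\<not> k < 2" then have "m*k \<ge> m*2" using assms(1) by (intro mult_left_mono) auto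
    thus False using k assms by linarith qed
  ultimately have "k = -1 \<or> k = 0 \<or> k = 1" by auto
  thus "t = 0 \<or> t = m \<or> t = -m" using k by auto
qed auto

lemma cg: assumes "n \<ge> 3" "x < 2*n" "y < 2*n" "s \<in> {1, -1, int n - 1, -(int n - 1), int n}"
  shows "[int x - int y = s] (mod int (2*n)) \<longleftrightarrow>
       int x - int y - s = 0 \<or> int x - int y - s = 2 * int n \<or> int x - int y - s = - (2 * int n)"
    unfolding cong_iff_dvd_diff using assms
    by (subst dvd_small) auto

lemma key:
  fixes e k N :: int
  assumes "N \<ge> 3" "-N < e" "e < N" "k = -1 \<or> k = 0 \<or> k = 1"
  shows "((\<exists>s\<in>{1, -1, N - 1, -(N - 1), N}. e + k*N - s = 0 \<or> e + k*N - s = 2*N \<or> e + k*N - s = -(2*N)))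
     \<longleftrightarrow> (e \<noteq> 0 \<or> k \<noteq> 0) \<and> (e = 0 \<or> e = 1 \<or> e = -1 \<or> e = N - 1 \<or> e = 1 - N)"
  using assms(4)
proof (elim disjE)
  assume k: "k = -1"
  show ?thesis unfolding k using assms(1-3) by auto
next
  assume k: "k = 0"
  show ?thesis unfolding k using assms(1-3) by auto
next
  assume k: "k = 1"
  show ?thesis unfolding k using assms(1-3) by auto
qed

lemma ra_int:
  assumes "a < n" "b < n" "n \<ge> 3"
  shows "ra n a b \<longleftrightarrow> (let e = int a - int b in e = 0 \<or> e = 1 \<or> e = -1 \<or> e = int n - 1 \<or> e = 1 - int n)"
  using assms unfolding ra_def Let_def by auto

lemma decomp:
  assumes "x < 2*n"
  shows "int x = int (rg n x) + (if x < n then 0 else 1) * int n" "rg n x < n"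
  using assms unfolding rg_def by auto

lemma adj_iff:
  assumes n3: "n \<ge> 3"
  shows "cay_adj (2*n) {1, -1, int n - 1, -(int n - 1), int n} x y \<longleftrightarrow>
    x < 2*n \<and> y < 2*n \<and> x \<noteq> y \<and> ra n (rg n x) (rg n y)"
proof (cases "x < 2*n \<and> y < 2*n")
  case True
  define S where "S = {1, -1, int n - 1, -(int n - 1), int n}"
  have c: "[int x - int y = s] (mod int (2*n)) \<longleftrightarrow>
       int x - int y - s = 0 \<or> int x - int y - s = 2 * int n \<or> int x - int y - s = - (2 * int n)"
    if "s \<in> S" for s
    using cg[OF n3 conjunct1[OF True] conjunct2[OF True], of s] that unfolding S_def by blast
  have e: "cay_adj (2*n) S x y \<longleftrightarrow>
     (\<exists>s\<in>S. int x - int y - s = 0 \<or> int x - int y - s = 2 * int n \<or> int x - int y - s = - (2 * int n))"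
  proof -
    have "(\<exists>s\<in>S. [int x - int y = s] (mod int (2*n))) \<longleftrightarrow>
      (\<exists>s\<in>S. int x - int y - s = 0 \<or> int x - int y - s = 2 * int n \<or> int x - int y - s = - (2 * int n))"
      by (rule bex_cong[OF refl c])
    thus ?thesis unfolding cay_adj_def using True by simp
  qed
  define a where "a = rg n x"
  define b where "b = rg n y"
  define p :: int where "p = (if x < n then 0 else 1)"
  define q :: int where "q = (if y < n then 0 else 1)"
  have xa: "int x = int a + p * int n" "a < n" using decomp[of x n] True unfolding a_def p_def by auto
  have yb: "int y = int b + q * int n" "b < n" using decomp[of y n] True unfolding b_def q_def by auto
  have d: "int x - int y = (int a - int b) + (p - q) * int n" using xa yb by (simp add: algebra_simps)
  have k: "p - q = -1 \<or> p - q = 0 \<or> p - q = 1" unfolding p_def q_def by auto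
  have K: "cay_adj (2*n) S x y \<longleftrightarrow> (int a - int b \<noteq> 0 \<or> p - q \<noteq> 0) \<and>
     (int a - int b = 0 \<or> int a - int b = 1 \<or> int a - int b = -1 \<or> int a - int b = int n - 1 \<or> int a - int b = 1 - int n)"
  proof -
    have "(\<exists>s\<in>S. (int a - int b) + (p - q) * int n - s = 0 \<or> (int a - int b) + (p - q) * int n - s = 2 * int n
        \<or> (int a - int b) + (p - q) * int n - s = - (2 * int n)) \<longleftrightarrow> (int a - int b \<noteq> 0 \<or> p - q \<noteq> 0) \<and>
     (int a - int b = 0 \<or> int a - int b = 1 \<or> int a - int b = -1 \<or> int a - int b = int n - 1 \<or> int a - int b = 1 - int n)"
      unfolding S_def by (rule key) (use n3 xa yb k in auto)
    then show ?thesis unfolding e d .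
  qed
  have xy: "x = y \<longleftrightarrow> (int a - int b = 0 \<and> p - q = 0)"
  proof
    assume "x = y" then show "int a - int b = 0 \<and> p - q = 0" unfolding a_def b_def p_def q_def by simp
  next
    assume "int a - int b = 0 \<and> p - q = 0" then show "x = y" using xa yb by simp
  qed
  show ?thesis unfolding S_def[symmetric] K using xy ra_int[OF xa(2) yb(2) n3] True
    unfolding a_def b_def Let_def by auto
qed (auto simp: cay_adj_def)

abbreviation EE :: "nat \<Rightarrow> nat \<Rightarrow> nat \<Rightarrow> bool" where
  "EE n \<equiv> cay_adj (2*n) {1, -1, int n - 1, -(int n - 1), int n}"

lemma comp_self: "x \<in> U \<Longrightarrow> x \<in> component_of E U x"
  unfolding component_of_def by simp

lemma comp_sub: "component_of E U x \<subseteq> U"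
  unfolding component_of_def by auto

lemma comp_step: "y \<in> component_of E U x \<Longrightarrow> z \<in> U \<Longrightarrow> E y z \<Longrightarrow> z \<in> component_of E U x"
  unfolding component_of_def by (auto intro: rtranclp.rtrancl_into_rtrancl)

lemma comp_trans: "y \<in> component_of E U x \<Longrightarrow> z \<in> component_of E U y \<Longrightarrow> z \<in> component_of E U x"
  unfolding component_of_def by (auto intro: rtranclp_trans)

lemma rg_lt: "x < 2*n \<Longrightarrow> rg n x < n" unfolding rg_def by auto
lemma rg_j: "j < n \<Longrightarrow> rg n j = j" unfolding rg_def by auto
lemma rg_jn: "rg n (j + n) = j" unfolding rg_def by auto
lemma ra_refl: "ra n a a" unfolding ra_def by auto

definition Bk :: "nat \<Rightarrow> nat \<Rightarrow> nat set" where
  "Bk n k = {0..<n} \<union> {n..<n+2+k}"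

lemma ub_step:
  assumes n3: "n \<ge> 3" and k: "k + 3 \<le> n"
  shows "pzf_step (cay_vertices (2*n)) (EE n) (Bk n k) (Bk n (k+1))"
proof -
  let ?V = "cay_vertices (2*n)"
  let ?W = "component_of (EE n) (?V - Bk n k) (n+2+k)"
  have wV: "n+2+k \<in> ?V - Bk n k" using k unfolding cay_vertices_def Bk_def by auto
  have W: "?W \<in> components (EE n) (?V - Bk n k)" unfolding components_def using wV by auto
  have u: "k+1 \<in> Bk n k" using k unfolding Bk_def by auto
  have w: "n+2+k \<in> ?W" using comp_self[OF wV] .
  have rw: "rg n (n+2+k) = k+2" unfolding rg_def by auto
  have ru: "rg n (k+1) = k+1" unfolding rg_def using k by auto
  have Euw: "EE n (k+1) (n+2+k)" unfolding adj_iff[OF n3] rw ru ra_def using k by auto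
  have uniq: "\<forall>v\<in>?W. EE n (k+1) v \<longrightarrow> v = n+2+k"
  proof (intro ballI impI)
    fix v assume vW: "v \<in> ?W" and E: "EE n (k+1) v"
    have "v \<in> ?V - Bk n k" by (rule subsetD[OF comp_sub vW])
    hence v1: "v \<ge> n+2+k" "v < 2*n" unfolding cay_vertices_def Bk_def by auto
    hence "rg n v = v - n" unfolding rg_def by auto
    with E v1 show "v = n+2+k" unfolding adj_iff[OF n3] ru ra_def using k by auto
  qed
  have B': "Bk n (k+1) = insert (n+2+k) (Bk n k)" unfolding Bk_def by auto
  show ?thesis unfolding pzf_step_def
  proof (rule bexI[OF _ W], rule bexI[OF _ u], rule bexI[OF _ w])
    show "EE n (k+1) (n+2+k) \<and> (\<forall>v\<in>?W. EE n (k+1) v \<longrightarrow> v = n+2+k) \<and> Bk n (k+1) = insert (n+2+k) (Bk n k)"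
      using Euw uniq B' by (intro conjI)
  qed
qed

lemma ub_reach:
  assumes n3: "n \<ge> 3"
  shows "k + 2 \<le> n \<Longrightarrow> (pzf_step (cay_vertices (2*n)) (EE n))\<^sup>*\<^sup>* (Bk n 0) (Bk n k)"
proof (induction k)
  case 0 show ?case by (rule rtranclp.rtrancl_refl)
next
  case (Suc k)
  have k: "k + 3 \<le> n" using Suc.prems by simp
  have IH: "(pzf_step (cay_vertices (2*n)) (EE n))\<^sup>*\<^sup>* (Bk n 0) (Bk n k)" using Suc.IH k by simp
  have "(pzf_step (cay_vertices (2*n)) (EE n))\<^sup>*\<^sup>* (Bk n 0) (Bk n (k+1))"
    by (rule rtranclp.rtrancl_into_rtrancl[OF IH ub_step[OF n3 k]])
  then show ?case by simp
qed

lemma ub: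
  assumes n3: "n \<ge> 3"
  shows "pos_zero_forcing_set (cay_vertices (2*n)) (EE n) (Bk n 0) \<and> card (Bk n 0) = n + 2"
proof -
  have e1: "Bk n (n-2) = cay_vertices (2*n)" unfolding Bk_def cay_vertices_def using n3 by auto
  have e2: "Bk n 0 = {0..<n+2}" unfolding Bk_def by auto
  have r: "(pzf_step (cay_vertices (2*n)) (EE n))\<^sup>*\<^sup>* (Bk n 0) (cay_vertices (2*n))"
    using ub_reach[OF n3, of "n-2"] n3 unfolding e1 by simp
  have s: "Bk n 0 \<subseteq> cay_vertices (2*n)" unfolding e2 cay_vertices_def using n3 by auto
  show ?thesis unfolding pos_zero_forcing_set_def using r s e2 by simp
qed

lemma lb1_step:
  assumes n3: "n \<ge> 3" and j: "j < n" "j \<notin> B" "j + n \<notin> B"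
    and st: "pzf_step (cay_vertices (2*n)) (EE n) B B'"
  shows "j \<notin> B' \<and> j + n \<notin> B'"
proof -
  let ?V = "cay_vertices (2*n)"
  obtain W u w where W: "W \<in> components (EE n) (?V - B)" and u: "u \<in> B" and w: "w \<in> W"
    and Euw: "EE n u w" and H: "\<forall>v\<in>W. EE n u v \<longrightarrow> v = w" and B': "B' = insert w B"
    using st unfolding pzf_step_def by blast
  obtain x where W': "W = component_of (EE n) (?V - B) x" using W unfolding components_def by (rule imageE)
  have "w \<noteq> j \<and> w \<noteq> j + n"
  proof (rule ccontr)
    assume a: "\<not> (w \<noteq> j \<and> w \<noteq> j + n)"
    define w' where "w' = (if w = j then j + n else j)"
    have w'V: "w' \<in> ?V - B" using j n3 unfolding w'_def cay_vertices_def by auto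
    have aw: "w = j \<or> w = j + n" using a by auto
    have rww: "rg n w = j" "rg n w' = j" using aw rg_j[OF j(1)] rg_jn[of n j] unfolding w'_def by auto
    have ww: "w' \<noteq> w" using a n3 unfolding w'_def by auto
    have "w < 2*n" using Euw unfolding adj_iff[OF n3] by auto
    hence Eww: "EE n w w'" unfolding adj_iff[OF n3] rww using w'V ww ra_refl
      by (auto simp: cay_vertices_def)
    have "w' \<in> W" unfolding W' using comp_step[OF w[unfolded W'] w'V Eww] .
    moreover have "EE n u w'" using Euw w'V u unfolding adj_iff[OF n3] rww
      by (auto simp: cay_vertices_def)
    ultimately show False using H ww by auto
  qed
  thus ?thesis using B' j by auto
qed

lemma lb1_reach:
  assumes n3: "n \<ge> 3" and r: "(pzf_step (cay_vertices (2*n)) (EE n))\<^sup>*\<^sup>* B C"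
    and j: "j < n" "j \<notin> B" "j + n \<notin> B"
  shows "j \<notin> C \<and> j + n \<notin> C"
  using r
proof (induction rule: rtranclp_induct)
  case base then show ?case using j by auto
next
  case (step y z)
  then have a: "j \<notin> y" "j + n \<notin> y" by auto
  show ?case by (rule lb1_step[OF n3 j(1) a(1) a(2) step.hyps(2)])
qed

lemma adj_sym: "n \<ge> 3 \<Longrightarrow> EE n x y \<Longrightarrow> EE n y x"
  unfolding adj_iff ra_def by auto

lemma nostep:
  assumes n3: "n \<ge> 3" and BV: "B \<subseteq> cay_vertices (2*n)"
    and cov: "\<forall>j<n. j \<in> B \<or> j + n \<in> B"
    and one: "\<forall>i k. i < n \<longrightarrow> k < n \<longrightarrow> i \<in> B \<longrightarrow> i + n \<in> B \<longrightarrow> k \<in> B \<longrightarrow> k + n \<in> B \<longrightarrow> i = k"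
  shows "\<not> pzf_step (cay_vertices (2*n)) (EE n) B B'"
proof
  let ?V = "cay_vertices (2*n)"
  let ?U = "?V - B"
  let ?C = "component_of (EE n) ?U"
  define half where "half j \<longleftrightarrow> \<not> (j \<in> B \<and> j + n \<in> B)" for j
  define wh where "wh j = (if j \<in> B then j + n else j)" for j
  have whU: "wh j \<in> ?U" if "j < n" "half j" for j
    using that cov unfolding half_def wh_def cay_vertices_def by auto
  have rgwh: "rg n (wh j) = j" if "j < n" for j
    using that unfolding wh_def by (auto simp: rg_j rg_jn)
  have edge: "wh k \<in> ?C (wh j)" if "j < n" "k < n" "half j" "half k" "ra n j k" for j k
  proof (cases "j = k")
    case True then show ?thesis using comp_self[OF whU[OF that(2,4)]] by simp
  next
    case False
    have ne: "wh j \<noteq> wh k" using rgwh[OF that(1)] rgwh[OF that(2)] False by metis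
    have "EE n (wh j) (wh k)" unfolding adj_iff[OF n3] rgwh[OF that(1)] rgwh[OF that(2)]
      using whU[OF that(1,3)] whU[OF that(2,4)] ne that(5) by (simp add: cay_vertices_def)
    then show ?thesis using comp_step[OF comp_self[OF whU[OF that(1,3)]] whU[OF that(2,4)]] by auto
  qed
  have lin: "c < n \<longrightarrow> (\<forall>j. a \<le> j \<and> j \<le> c \<longrightarrow> half j) \<longrightarrow> wh c \<in> ?C (wh a) \<and> wh a \<in> ?C (wh c)"
    if "a \<le> c" for a c
    using that
  proof (induction c rule: dec_induct)
    case base then show ?case using comp_self[OF whU[of a]] by simp
  next
    case (step m)
    show ?case
    proof (intro impI)
      assume h: "Suc m < n" "\<forall>j. a \<le> j \<and> j \<le> Suc m \<longrightarrow> half j"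
      have IH: "wh m \<in> ?C (wh a)" "wh a \<in> ?C (wh m)" using step h by auto
      have hm: "half m" "half (Suc m)" using h step by auto
      have e1: "wh (Suc m) \<in> ?C (wh m)" using edge[of m "Suc m"] h hm by (auto simp: ra_def)
      have e2: "wh m \<in> ?C (wh (Suc m))" using edge[of "Suc m" m] h hm by (auto simp: ra_def)
      show "wh (Suc m) \<in> ?C (wh a) \<and> wh a \<in> ?C (wh (Suc m))"
        using comp_trans[OF IH(1) e1] comp_trans[OF e2 IH(2)] by auto
    qed
  qed
  have full_uniq: "half j" if "j < n" "f < n" "\<not> half f" "j \<noteq> f" for j f
    using that one unfolding half_def by blast
  have conn2: "wh b \<in> ?C (wh a) \<and> wh a \<in> ?C (wh b)"
    if ab: "a < n" "b < n" "half a" "half b" "a \<le> b" for a b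
  proof (cases "\<forall>j. a \<le> j \<and> j \<le> b \<longrightarrow> half j")
    case True then show ?thesis using lin[OF ab(5)] ab by auto
  next
    case False
    then obtain f where f: "a \<le> f" "f \<le> b" "\<not> half f" by auto
    have fab: "f \<noteq> a" "f \<noteq> b" using f ab by auto
    have fn: "f < n" using f ab by auto
    have H1: "\<forall>j. 0 \<le> j \<and> j \<le> a \<longrightarrow> half j"
    proof (intro allI impI)
      fix j assume "0 \<le> j \<and> j \<le> a" then show "half j" using full_uniq[OF _ fn f(3), of j] f fab ab by auto
    qed
    have H2: "\<forall>j. b \<le> j \<and> j \<le> n - 1 \<longrightarrow> half j"
    proof (intro allI impI)
      fix j assume "b \<le> j \<and> j \<le> n - 1" then show "half j" using full_uniq[OF _ fn f(3), of j] f fab ab by auto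
    qed
    have l1: "wh a \<in> ?C (wh 0) \<and> wh 0 \<in> ?C (wh a)"
      using lin[of 0 a] ab H1 by auto
    have l2: "wh (n-1) \<in> ?C (wh b) \<and> wh b \<in> ?C (wh (n-1))"
      using lin[of b "n-1"] ab H2 by auto
    have h0: "half 0" "half (n-1)" using full_uniq[OF _ fn f(3)] f fab ab n3 by auto
    have e1: "wh (n-1) \<in> ?C (wh 0)" using edge[of 0 "n-1"] h0 n3 by (auto simp: ra_def)
    have e2: "wh 0 \<in> ?C (wh (n-1))" using edge[of "n-1" 0] h0 n3 by (auto simp: ra_def)
    have "wh b \<in> ?C (wh a)"
      by (rule comp_trans[OF comp_trans[OF conjunct2[OF l1] e1] conjunct2[OF l2]])
    moreover have "wh a \<in> ?C (wh b)"
      by (rule comp_trans[OF comp_trans[OF conjunct1[OF l2] e2] conjunct1[OF l1]])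
    ultimately show ?thesis by blast
  qed
  have conn: "wh b \<in> ?C (wh a)" if ab: "a < n" "b < n" "half a" "half b" for a b
  proof (cases "a \<le> b")
    case True then show ?thesis using conn2[of a b] ab by blast
  next
    case False then show ?thesis using conn2[of b a] ab by simp
  qed
  assume "pzf_step ?V (EE n) B B'"
  then obtain W u w where W: "W \<in> components (EE n) ?U" and u: "u \<in> B" and w: "w \<in> W"
    and Euw: "EE n u w" and H: "\<forall>v\<in>W. EE n u v \<longrightarrow> v = w"
    unfolding pzf_step_def by blast
  obtain x where W': "W = ?C x" using W unfolding components_def by (rule imageE)
  have wU: "w \<in> ?U" using subsetD[OF comp_sub w[unfolded W']] .
  have w2: "w < 2*n" "w \<notin> B" using wU unfolding cay_vertices_def by auto
  have ww: "w = wh (rg n w) \<and> rg n w < n \<and> half (rg n w)"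
  proof (cases "w < n")
    case True
    then have "rg n w = w" unfolding rg_def by simp
    then show ?thesis using True w2 unfolding wh_def half_def by simp
  next
    case False
    then obtain r where r: "w = r + n" "r < n" using w2 by (metis add.commute le_add_diff_inverse not_less add_less_cancel_left mult_2)
    then have "rg n w = r" using rg_jn by simp
    moreover have "r \<in> B" using cov r w2 by auto
    ultimately show ?thesis using r w2 unfolding wh_def half_def by simp
  qed
  have good: "wh j \<in> W \<and> EE n u (wh j)" if "j < n" "half j" "ra n (rg n u) j" for j
  proof
    have "wh j \<in> ?C (wh (rg n w))" using conn[of "rg n w" j] that ww by blast
    hence "wh j \<in> ?C w" using ww by simp
    then show "wh j \<in> W" unfolding W' using comp_trans[OF w[unfolded W']] by blast
    show "EE n u (wh j)" using whU[OF that(1,2)] u BV that(3) unfolding adj_iff[OF n3] rgwh[OF that(1)]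
      by (auto simp: cay_vertices_def)
  qed
  define i where "i = rg n u"
  have i: "i < n" using u BV rg_lt unfolding i_def cay_vertices_def by auto
  obtain j1 j2 where j: "j1 < n" "j2 < n" "j1 \<noteq> j2" "half j1" "half j2" "ra n i j1" "ra n i j2"
  proof -
    define p where "p = (if i = 0 then n - 1 else i - 1)"
    define q where "q = (if i = n - 1 then 0 else i + 1)"
    have pq: "p < n" "q < n" "p \<noteq> q" "p \<noteq> i" "q \<noteq> i" "ra n i p" "ra n i q"
      using i n3 unfolding p_def q_def ra_def by auto
    show ?thesis
    proof (cases "half i")
      case True
      show ?thesis
      proof (cases "half p")
        case True
        show ?thesis by (rule that[of i p]) (use i pq \<open>half i\<close> True ra_refl in auto)
      next
        case False
        have "half q" using full_uniq[OF pq(2) pq(1) False] pq by auto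
        show ?thesis by (rule that[of i q]) (use i pq \<open>half i\<close> \<open>half q\<close> ra_refl in auto)
      qed
    next
      case False
      have "half p" "half q" using full_uniq[OF pq(1) i False] full_uniq[OF pq(2) i False] pq by auto
      show ?thesis by (rule that[of p q]) (use pq \<open>half p\<close> \<open>half q\<close> in auto)
    qed
  qed
  have "wh j1 = w" "wh j2 = w" using good[OF j(1,4)] good[OF j(2,5)] j H unfolding i_def by auto
  then show False using rgwh[OF j(1)] rgwh[OF j(2)] j(3) by metis
qed

lemma card_two_full:
  assumes BV: "B \<subseteq> cay_vertices (2*n)" and cov: "\<forall>j<n. j \<in> B \<or> j + n \<in> B"
    and ik: "i < n" "k < n" "i \<noteq> k" "i \<in> B" "i + n \<in> B" "k \<in> B" "k + n \<in> B"
  shows "n + 2 \<le> card B"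
proof -
  define g where "g j = (if j \<in> B then j else j + n)" for j
  have rg_g: "rg n (g j) = j" if "j < n" for j using that unfolding g_def by (auto simp: rg_j rg_jn)
  have inj: "inj_on g {..<n}" by (rule inj_on_inverseI[where g = "rg n"]) (use rg_g in auto)
  have cG: "card (g ` {..<n}) = n" using card_image[OF inj] by simp
  have GB: "g ` {..<n} \<subseteq> B" using cov unfolding g_def by auto
  have ni: "i + n \<notin> g ` {..<n}" "k + n \<notin> g ` {..<n}" using ik unfolding g_def by (auto split: if_splits)
  have fin: "finite B" using BV finite_subset unfolding cay_vertices_def by blast
  have "insert (i + n) (insert (k + n) (g ` {..<n})) \<subseteq> B" using GB ik by auto
  hence "card (insert (i + n) (insert (k + n) (g ` {..<n}))) \<le> card B" using fin card_mono by blast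
  moreover have "card (insert (i + n) (insert (k + n) (g ` {..<n}))) = n + 2"
    using ni ik cG by simp
  ultimately show ?thesis by simp
qed

theorem mainTheorem18:
  fixes n :: nat
  assumes "n \<ge> 3"
  shows "Zplus (cay_vertices (2*n))
           (cay_adj (2*n) {1, -1, int n - 1, -(int n - 1), int n}) = n + 2"
  unfolding Zplus_def
proof (rule Least_equality)
  show "\<exists>B. pos_zero_forcing_set (cay_vertices (2*n)) (EE n) B \<and> card B = n + 2"
    using ub[OF assms] by blast
next
  fix y assume "\<exists>B. pos_zero_forcing_set (cay_vertices (2*n)) (EE n) B \<and> card B = y"
  then obtain B where BV: "B \<subseteq> cay_vertices (2*n)"
    and r: "(pzf_step (cay_vertices (2*n)) (EE n))\<^sup>*\<^sup>* B (cay_vertices (2*n))" and cB: "card B = y"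
    unfolding pos_zero_forcing_set_def by blast
  show "n + 2 \<le> y"
  proof (rule ccontr)
    assume small: "\<not> n + 2 \<le> y"
    show False
    proof (cases "\<exists>j<n. j \<notin> B \<and> j + n \<notin> B")
      case True
      then obtain j where j: "j < n" "j \<notin> B" "j + n \<notin> B" by blast
      have "j \<notin> cay_vertices (2*n)" using lb1_reach[OF assms r j] by blast
      then show False using j unfolding cay_vertices_def by auto
    next
      case False
      then have cov: "\<forall>j<n. j \<in> B \<or> j + n \<in> B" by blast
      have one: "\<forall>i k. i < n \<longrightarrow> k < n \<longrightarrow> i \<in> B \<longrightarrow> i + n \<in> B \<longrightarrow> k \<in> B \<longrightarrow> k + n \<in> B \<longrightarrow> i = k"
        using card_two_full[OF BV cov] small cB by (meson not_less_eq_eq)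
      have ns: "\<And>B'. \<not> pzf_step (cay_vertices (2*n)) (EE n) B B'" using nostep[OF assms BV cov one] .
      have "B = cay_vertices (2*n)" using r ns by (cases rule: converse_rtranclpE) auto
      then have "card B = 2*n" unfolding cay_vertices_def by simp
      then show False using small cB assms by simp
    qed
  qed
qed
end
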